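(* For $a,b>0$, with $D:=a\partial_a+b\partial_b$, $$\mathfrak H_{(0,0,0)}(a,b)=-[1,a,b]\log,\qquad \mathfrak H_{(0,1,0)}=-\partial_a\mathfrak H_{(0,0,0)},\qquad \mathfrak H_{(1,0,0)}=(D+2)\,\mathfrak H_{(0,0,0)},$$ $$\mathfrak H_{(2,0,0)}=\tfrac12(D+3)\,\mathfrak H_{(1,0,0)}=-\tfrac12(D+3)(D+2)[1,a,b]\log,\qquad \mathfrak H_{(1,1,0)}=-\partial_a\mathfrak H_{(1,0,0)}.$$
   Context: $\mathfrak H_\alpha(a,b):=\int_0^\infty x^{|\alpha|+1}(1+x)^{-\alpha_0-1}(1+ax)^{-\alpha_1-1}(1+bx)^{-\alpha_2-1}\,dx$ for $\alpha\in\mathbb N^3$, $a,b>0$, $|\alpha|=\alpha_0+\alpha_1+\alpha_2$. Divided differences: for $f$ smooth on an open interval, $[y_0]f=f(y_0)$, $[y_0,\dots,y_n]f=\int_{\{t\ge0,\sum t_j=1\}}f^{(n)}(\sum t_jy_j)\,dt_1\cdots dt_n$ (for distinct points $=\sum_kf(y_k)\prod_{j\ne k}(y_k-y_j)^{-1}$). *)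

theory Defs
  imports "HOL-Analysis.Analysis"
begin

definition frakH :: "nat \<Rightarrow> nat \<Rightarrow> nat \<Rightarrow> real \<Rightarrow> real \<Rightarrow> real" where
  "frakH al0 al1 al2 a b =
     integral {0<..} (\<lambda>x::real. x ^ (al0 + al1 + al2 + 1) * (1 + x) powi (- int al0 - 1)
        * (1 + a * x) powi (- int al1 - 1) * (1 + b * x) powi (- int al2 - 1))"

text \<open>Divided difference on three points, via the simplex (Hermite--Genocchi) formula:
  \<open>[y0,y1,y2] f = \<integral>_{t1,t2 \<ge> 0, t1+t2 \<le> 1} f''(t0 y0 + t1 y1 + t2 y2) dt1 dt2\<close>, \<open>t0 = 1 - t1 - t2\<close>.\<close>
definition divdiff3 :: "(real \<Rightarrow> real) \<Rightarrow> real \<Rightarrow> real \<Rightarrow> real \<Rightarrow> real" where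
  "divdiff3 f y0 y1 y2 =
     integral {(t1, t2). 0 \<le> t1 \<and> 0 \<le> t2 \<and> t1 + t2 \<le> 1}
       (\<lambda>(t1::real, t2::real). (deriv ^^ 2) f ((1 - t1 - t2) * y0 + t1 * y1 + t2 * y2))"

definition partial_a :: "(real \<Rightarrow> real \<Rightarrow> real) \<Rightarrow> real \<Rightarrow> real \<Rightarrow> real" where
  "partial_a F a b = deriv (\<lambda>x. F x b) a"

definition partial_b :: "(real \<Rightarrow> real \<Rightarrow> real) \<Rightarrow> real \<Rightarrow> real \<Rightarrow> real" where
  "partial_b F a b = deriv (\<lambda>y. F a y) b"

definition Dop :: "(real \<Rightarrow> real \<Rightarrow> real) \<Rightarrow> real \<Rightarrow> real \<Rightarrow> real" where
  "Dop F a b = a * partial_a F a b + b * partial_b F a b"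

end

theory Submission
  imports Defs "HOL-Real_Asymp.Real_Asymp"
begin


definition ht :: "nat \<Rightarrow> nat \<Rightarrow> nat \<Rightarrow> real \<Rightarrow> real \<Rightarrow> real \<Rightarrow> real" where
  "ht k0 k1 k2 a b t = t^(k0+k1+k2+1) / ((1-t+a*t)^(k1+1) * (1-t+b*t)^(k2+1))"

lemma lin_pos: "0 < a \<Longrightarrow> 0 \<le> t \<Longrightarrow> t \<le> 1 \<Longrightarrow> 0 < 1 - t + a * (t::real)"
proof (cases "t = 1")
  case False
  assume "0 < a" "0 \<le> t" "t \<le> 1"
  then have "0 < 1 - t" "0 \<le> a * t" using False by auto
  then show ?thesis by linarith
qed auto

lemma powi_neg: "(y::real) powi (- int k - 1) = 1 / y^(k+1)"
  by (metis add.commute diff_conv_add_uminus minus_add_distrib of_nat_Suc power_int_minus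
      power_int_of_nat divide_inverse mult_1 Suc_eq_plus1)

lemma ht_cont: "0 < a \<Longrightarrow> 0 < b \<Longrightarrow> continuous_on {0..1} (ht k0 k1 k2 a b)"
  unfolding ht_def
  by (intro continuous_intros) (auto dest: lin_pos[of a] lin_pos[of b])

lemma cancel_aux: "(c::real) \<noteq> 0 \<Longrightarrow> x * c / (c * d * e) = x / (d * e)"
  by (simp add: field_simps)

lemma frakH_t:
  assumes a: "a > 0" and b: "b > 0"
  shows "frakH k0 k1 k2 a b = integral {0..1} (ht k0 k1 k2 a b)"
proof -
  define n where "n = k0+k1+k2"
  define f where "f x = x^(n+1) / ((1+x)^(k0+1) * (1+a*x)^(k1+1) * (1+b*x)^(k2+1))" for x::real
  define g where "g t = t/(1-t)" for t :: real
  define g' where "g' t = 1/(1-t)^2" for t :: real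
  have H: "frakH k0 k1 k2 a b = integral {0<..} f"
    unfolding frakH_def f_def n_def powi_neg by simp
  have eq: "f (g t) * g' t = ht k0 k1 k2 a b t" if t: "0 < t" "t < 1" for t
  proof -
    have 1: "1 + g t = 1/(1-t)" "1 + a * g t = (1-t+a*t)/(1-t)" "1 + b * g t = (1-t+b*t)/(1-t)"
      using t by (auto simp: g_def field_simps)
    have p: "1-t+a*t > 0" "1-t+b*t > 0" using lin_pos[of a t] lin_pos[of b t] a b t by auto
    have "f (g t) * g' t = t^(n+1) * (1-t)^(k0+1+k1+1+k2+1) / ((1-t)^(n+1) * (1-t)^2 * (1-t+a*t)^(k1+1) * (1-t+b*t)^(k2+1))"
      unfolding f_def 1 g'_def using t p
      by (simp add: g_def power_divide power_add field_simps)
    also have "(1-t)^(k0+1+k1+1+k2+1) = (1-t)^(n+1) * (1-t)^2"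
      unfolding n_def power_add[symmetric] by (simp add: algebra_simps)
    also have "t^(n+1) * ((1-t)^(n+1) * (1-t)^2) / ((1-t)^(n+1) * (1-t)^2 * (1-t+a*t)^(k1+1) * (1-t+b*t)^(k2+1))
       = t^(n+1) / ((1-t+a*t)^(k1+1) * (1-t+b*t)^(k2+1))"
      by (rule cancel_aux) (use t in auto)
    finally show ?thesis unfolding ht_def n_def .
  qed
  have cont: "continuous_on {0..1} (ht k0 k1 k2 a b)" using ht_cont a b by blast
  have e01: "einterval 0 1 = {0::real<..<1}" by (auto simp: einterval_def)
  have e0i: "einterval 0 \<infinity> = {0::real<..}" by (auto simp: einterval_def zero_ereal_def)
  have si: "set_integrable lborel {0<..<1} (ht k0 k1 k2 a b)"
    by (rule set_integrable_subset[OF borel_integrable_atLeastAtMost'[OF cont]]) auto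
  have int01: "set_integrable lborel (einterval 0 1) (\<lambda>t. f (g t) * g' t)"
    unfolding e01 using si by (subst set_integrable_cong[OF refl refl, of _ _ "ht k0 k1 k2 a b"]) (auto simp: eq)
  have fpos: "0 \<le> f x" if "0 \<le> x" for x using that a b unfolding f_def by simp
  have der: "DERIV g t :> g' t" if "0 < t" "t < 1" for t
    using that unfolding g_def g'_def
    by (auto intro!: derivative_eq_intros simp: field_simps power2_eq_square)
  have cf: "isCont f x" if "0 < x" for x
  proof -
    have "1 + a*x \<noteq> 0" "1+b*x \<noteq> 0" "1 + x \<noteq> 0"
      using mult_pos_pos[OF a that] mult_pos_pos[OF b that] that by auto
    then show ?thesis unfolding f_def by (intro continuous_intros) auto
  qed
  have cg': "isCont g' t" if "t < 1" for t
    using that unfolding g'_def by (intro continuous_intros) auto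
  have lim0: "(g \<longlongrightarrow> 0) (at_right 0)" unfolding g_def by real_asymp
  have lim1: "LIM x at_left 1. g x :> at_top" unfolding g_def by real_asymp
  have c1: "0 < ereal x \<Longrightarrow> ereal x < 1 \<Longrightarrow> 0 < x \<and> x < 1" for x
    by (simp add: zero_ereal_def one_ereal_def)
  have A: "((ereal \<circ> g \<circ> real_of_ereal) \<longlongrightarrow> 0) (at_right 0)"
    unfolding zero_ereal_def ereal_tendsto_simps using lim0 by simp
  have B: "((ereal \<circ> g \<circ> real_of_ereal) \<longlongrightarrow> \<infinity>) (at_left 1)"
    unfolding one_ereal_def ereal_tendsto_simps using lim1 by simp
  have P2: "DERIV g x :> g' x" and P3: "isCont f (g x)" and P4: "isCont g' x" and P5: "0 \<le> f (g x)"
    if x: "0 < ereal x" "ereal x < 1" for x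
  proof -
    have x': "0 < x" "x < 1" using c1 x by blast+
    show "DERIV g x :> g' x" using der x' by blast
    show "isCont f (g x)" using cf x' unfolding g_def by simp
    show "isCont g' x" using cg' x' by blast
    show "0 \<le> f (g x)" using fpos x' unfolding g_def by simp
  qed
  have P6: "0 \<le> g' x" for x unfolding g'_def by simp
  note S = interval_integral_substitution_nonneg[of 0 1 g g' f 0 \<infinity>, OF _ P2 P3 P4 P5 P6 A B int01]
  have S1: "set_integrable lborel (einterval 0 \<infinity>) f" using S by simp
  have S2: "(LBINT x=0..\<infinity>. f x) = (LBINT t=0..1. f (g t) * g' t)" using S by simp
  have "integral {0<..} f = (LINT x:{0<..}|lborel. f x)"
    using set_borel_integral_eq_integral(2)[OF S1] unfolding e0i by simp
  also have "\<dots> = (LBINT x=0..\<infinity>. f x)" by (simp add: interval_lebesgue_integral_0_infty)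
  also have "\<dots> = (LBINT t=0..1. f (g t) * g' t)" by (rule S2)
  also have "\<dots> = (LINT t:einterval 0 1|lborel. f (g t) * g' t)"
    by (rule interval_lebesgue_integral_le_eq) simp
  also have "\<dots> = integral (einterval 0 1) (\<lambda>t. f (g t) * g' t)"
    by (rule set_borel_integral_eq_integral(2)[OF int01])
  also have "\<dots> = integral {0<..<1} (ht k0 k1 k2 a b)"
    unfolding e01 by (rule integral_cong) (simp add: eq)
  also have "\<dots> = integral {0..1} (ht k0 k1 k2 a b)" by (simp add: integral_open_interval_real)
  finally show ?thesis using H by simp
qed


lemma alg1: fixes A B t x :: real assumes "A\<noteq>0" "B\<noteq>0"
 shows "(0 * (A^(p+1) * B^q) - t^m * (real (p+1) * ((0 + (1*t + 0*x)) * A^(p+1-Suc 0)) * B^q + 0 * A^(p+1))) / (A^(p+1)*B^q*(A^(p+1)*B^q)) = -(real p + 1) * (t^(m + 1) / (A^(Suc p+1) * B^q))"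
proof -
  have "A^(p+1) = A^p * A" "A^(Suc p+1) = A^p*A*A" "A^(p+1-Suc 0) = A^p" by simp_all
  then show ?thesis using assms by (simp add: field_simps power2_eq_square)
qed

lemma ht_deriv:
  assumes "0 < x" "0 < b" "0 \<le> t" "t \<le> 1"
  shows "((\<lambda>x. ht k0 k1 k2 x b t) has_field_derivative - (real k1 + 1) * ht k0 (Suc k1) k2 x b t) (at x within U)"
proof -
  have A: "1 - t + x * t \<noteq> 0" and B: "1 - t + b * t \<noteq> 0" using lin_pos[of x t] lin_pos[of b t] assms by auto
  have e: "k0 + Suc k1 + k2 + 1 = (k0+k1+k2+1)+1" by simp
  show ?thesis unfolding ht_def e
    apply (rule derivative_eq_intros refl)+
    using A B apply simp
    by (rule alg1[OF A B])
qed

lemma ht_cont2: "0 < b \<Longrightarrow> continuous_on ({0<..} \<times> cbox 0 1) (\<lambda>(x, t). c * ht k0 k1 k2 x b t)"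
proof -
  assume b: "0 < b"
  have "continuous_on ({0<..} \<times> cbox 0 1) (\<lambda>z. c * (snd z^(k0+k1+k2+1) / ((1 - snd z + fst z * snd z)^(k1+1) * (1 - snd z + b * snd z)^(k2+1))))"
  proof (intro continuous_intros ballI)
    fix z :: "real \<times> real" assume z: "z \<in> {0<..} \<times> cbox 0 1"
    have "0 < 1 - snd z + fst z * snd z" "0 < 1 - snd z + b * snd z"
      using z b lin_pos[of "fst z" "snd z"] lin_pos[of b "snd z"] by (auto simp: mem_Times_iff)
    then show "(1 - snd z + fst z * snd z)^(k1+1) * (1 - snd z + b * snd z)^(k2+1) \<noteq> 0" by simp
  qed
  then show ?thesis by (simp add: case_prod_unfold ht_def)
qed

lemma frakH_deriv_a:
  assumes a: "0 < a" and b: "0 < b"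
  shows "((\<lambda>x. frakH k0 k1 k2 x b) has_field_derivative - (real k1 + 1) * frakH k0 (Suc k1) k2 a b) (at a)"
proof -
  have L: "((\<lambda>x. integral (cbox 0 1) (ht k0 k1 k2 x b)) has_field_derivative
      integral (cbox 0 1) (\<lambda>t. - (real k1 + 1) * ht k0 (Suc k1) k2 a b t)) (at a within {0<..})"
  proof (rule leibniz_rule_field_derivative[where U="{0<..}" and f="\<lambda>x t. ht k0 k1 k2 x b t"
        and fx="\<lambda>x t. - (real k1 + 1) * ht k0 (Suc k1) k2 x b t"])
    fix x t :: real assume "x \<in> {0<..}" "t \<in> cbox 0 1"
    then show "((\<lambda>x. ht k0 k1 k2 x b t) has_field_derivative - (real k1 + 1) * ht k0 (Suc k1) k2 x b t) (at x within {0<..})"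
      using b by (intro ht_deriv) auto
  next
    fix x :: real assume "x \<in> {0<..}"
    then show "ht k0 k1 k2 x b integrable_on cbox 0 1"
      using ht_cont[of x b] b by (auto intro!: integrable_continuous_real)
  next
    show "continuous_on ({0<..} \<times> cbox 0 1) (\<lambda>(x, t). - (real k1 + 1) * ht k0 (Suc k1) k2 x b t)"
      using ht_cont2[OF b] .
  qed (use a in auto)
  have e1: "at a within {0<..} = at a" by (rule at_within_open) (use a in auto)
  have e3: "integral (cbox 0 1) (\<lambda>t. - (real k1 + 1) * ht k0 (Suc k1) k2 a b t) = - (real k1 + 1) * frakH k0 (Suc k1) k2 a b"
    unfolding Henstock_Kurzweil_Integration.integral_mult_right cbox_interval frakH_t[OF a b] ..
  have L2: "((\<lambda>x. integral (cbox 0 1) (ht k0 k1 k2 x b)) has_field_derivative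
      - (real k1 + 1) * frakH k0 (Suc k1) k2 a b) (at a)"
    using L unfolding e1 e3 .
  show ?thesis
  proof (rule has_field_derivative_transform_within_open[OF L2, of "{0<..}"])
    fix x :: real assume "x \<in> {0<..}"
    then show "integral (cbox 0 1) (ht k0 k1 k2 x b) = frakH k0 k1 k2 x b"
      using frakH_t[of x b] b by (simp add: cbox_interval)
  qed (use a in auto)
qed

lemma alg3: fixes A B a b t :: real assumes A: "A \<noteq>0" and B: "B\<noteq>0" and eA: "A = 1 - t + a*t" and eB: "B = 1-t+b*t"
shows "-(((2*t)*(1-t) - t^2)*(A*B) - t^2*(1-t)*((a-1)*B + (b-1)*A)) / ((A*B)*(A*B)) = t^2/(A*B) + a*t^2/(A^2*B) + b*t^2/(A*B^2) - 2*t/(A*B)"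
proof -
  have N: "-(((2*t)*(1-t) - t^2)*(A*B) - t^2*(1-t)*((a-1)*B + (b-1)*A)) = t^2*A*B + a*t^2*B + b*t^2*A - 2*t*A*B"
    unfolding eA eB by (simp add: algebra_simps power2_eq_square)
  have "t^2/(A*B) + a*t^2/(A^2*B) + b*t^2/(A*B^2) - 2*t/(A*B) = (t^2*A*B + a*t^2*B + b*t^2*A - 2*t*A*B) / ((A*B)*(A*B))"
    using A B by (simp add: field_simps power2_eq_square)
  then show ?thesis using N by simp
qed


lemma ht_swap: "ht k0 k1 k2 a b t = ht k0 k2 k1 b a t"
  unfolding ht_def by (simp add: ac_simps)

lemma frakH_swap: "0 < a \<Longrightarrow> 0 < b \<Longrightarrow> frakH k0 k1 k2 a b = frakH k0 k2 k1 b a"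
proof -
  assume a: "0 < a" and b: "0 < b"
  have "ht k0 k1 k2 a b = ht k0 k2 k1 b a" by (rule ext) (rule ht_swap)
  then show ?thesis using frakH_t[OF a b, of k0 k1 k2] frakH_t[OF b a, of k0 k2 k1] by simp
qed

lemma frakH_deriv_b:
  assumes a: "0 < a" and b: "0 < b"
  shows "((\<lambda>y. frakH k0 k1 k2 a y) has_field_derivative - (real k2 + 1) * frakH k0 k1 (Suc k2) a b) (at b)"
proof -
  have L: "((\<lambda>y. frakH k0 k2 k1 y a) has_field_derivative - (real k2 + 1) * frakH k0 k1 (Suc k2) a b) (at b)"
    using frakH_deriv_a[OF b a, of k0 k2 k1] frakH_swap[OF a b, of k0 k1 "Suc k2"] by simp
  show ?thesis
  proof (rule has_field_derivative_transform_within_open[OF L, of "{0<..}"])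
    fix y :: real assume "y \<in> {0<..}"
    then show "frakH k0 k2 k1 y a = frakH k0 k1 k2 a y" using frakH_swap[of a y] a by simp
  qed (use b in auto)
qed

lemma partial_a_frakH: "0 < a \<Longrightarrow> 0 < b \<Longrightarrow>
   partial_a (frakH k0 k1 k2) a b = - (real k1 + 1) * frakH k0 (Suc k1) k2 a b"
  unfolding partial_a_def by (rule DERIV_imp_deriv[OF frakH_deriv_a])

lemma partial_b_frakH: "0 < a \<Longrightarrow> 0 < b \<Longrightarrow>
   partial_b (frakH k0 k1 k2) a b = - (real k2 + 1) * frakH k0 k1 (Suc k2) a b"
  unfolding partial_b_def by (rule DERIV_imp_deriv[OF frakH_deriv_b])

lemma Dop_frakH: assumes a: "0 < a" and b: "0 < b" shows "
   Dop (frakH k0 k1 k2) a b = - (real k1 + 1) * a * frakH k0 (Suc k1) k2 a b - (real k2 + 1) * b * frakH k0 k1 (Suc k2) a b"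
  unfolding Dop_def partial_a_frakH[OF a b] partial_b_frakH[OF a b] by (simp add: algebra_simps)

lemma Dop_cong:
  assumes a: "0 < a" and b: "0 < b" and G: "\<And>u v. 0 < u \<Longrightarrow> 0 < v \<Longrightarrow> G u v = c * frakH k0 k1 k2 u v"
  shows "Dop G a b = c * Dop (frakH k0 k1 k2) a b"
proof -
  have da: "partial_a G a b = c * (- (real k1 + 1) * frakH k0 (Suc k1) k2 a b)"
    unfolding partial_a_def
  proof (rule DERIV_imp_deriv, rule has_field_derivative_transform_within_open[of _ _ _ "{0<..}"])
    show "((\<lambda>x. c * frakH k0 k1 k2 x b) has_field_derivative c * (- (real k1 + 1) * frakH k0 (Suc k1) k2 a b)) (at a)"
      by (rule DERIV_cmult[OF frakH_deriv_a[OF a b]])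
  qed (use a b G in auto)
  have db: "partial_b G a b = c * (- (real k2 + 1) * frakH k0 k1 (Suc k2) a b)"
    unfolding partial_b_def
  proof (rule DERIV_imp_deriv, rule has_field_derivative_transform_within_open[of _ _ _ "{0<..}"])
    show "((\<lambda>y. c * frakH k0 k1 k2 a y) has_field_derivative c * (- (real k2 + 1) * frakH k0 k1 (Suc k2) a b)) (at b)"
      by (rule DERIV_cmult[OF frakH_deriv_b[OF a b]])
  qed (use a b G in auto)
  show ?thesis unfolding Dop_frakH[OF a b] unfolding Dop_def da db by (simp add: algebra_simps)
qed

lemma hi: "0 < a \<Longrightarrow> 0 < b \<Longrightarrow> (ht k0 k1 k2 a b has_integral frakH k0 k1 k2 a b) {0..1}"
  using ht_cont[of a b k0 k1 k2] frakH_t[of a b k0 k1 k2]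
  by (simp add: integrable_integral integrable_continuous_real)

lemma I3:
  assumes a: "0 < a" and b: "0 < b"
  shows "frakH 1 0 0 a b + a * frakH 0 1 0 a b + b * frakH 0 0 1 a b - 2 * frakH 0 0 0 a b = 0"
proof -
  define R where "R t = t^2 * (1-t) / ((1-t+a*t) * (1-t+b*t))" for t :: real
  have "((\<lambda>t. ht 1 0 0 a b t + a * ht 0 1 0 a b t + b * ht 0 0 1 a b t - 2 * ht 0 0 0 a b t) has_integral
     (frakH 1 0 0 a b + a * frakH 0 1 0 a b + b * frakH 0 0 1 a b - 2 * frakH 0 0 0 a b)) {0..1}"
    by (intro has_integral_add has_integral_diff has_integral_mult_right hi a b)
  moreover have "((\<lambda>t. ht 1 0 0 a b t + a * ht 0 1 0 a b t + b * ht 0 0 1 a b t - 2 * ht 0 0 0 a b t) has_integral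
     (- R 1 - (- R 0))) {0..1}"
  proof (rule fundamental_theorem_of_calculus)
    fix t :: real assume t: "t \<in> {0..1}"
    have A: "1 - t + a * t \<noteq> 0" and B: "1 - t + b * t \<noteq> 0" using lin_pos[of a t] lin_pos[of b t] a b t by auto
    have "((\<lambda>t. - R t) has_real_derivative (ht 1 0 0 a b t + a * ht 0 1 0 a b t + b * ht 0 0 1 a b t - 2 * ht 0 0 0 a b t)) (at t within {0..1})"
    proof -
      let ?A = "1 - t + a*t" and ?B = "1 - t + b*t"
      have D: "(R has_real_derivative (((2*t)*(1-t) - t^2)*(?A*?B) - t^2*(1-t)*((a-1)*?B + (b-1)*?A)) / ((?A*?B)*(?A*?B))) (at t within {0..1})"
        unfolding R_def
        apply (rule derivative_eq_intros refl)+
        subgoal using A B by simp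
        by (simp add: algebra_simps)
      have T: "ht 1 0 0 a b t + a*ht 0 1 0 a b t + b*ht 0 0 1 a b t - 2*ht 0 0 0 a b t = t^2/(?A*?B) + a*t^2/(?A^2*?B) + b*t^2/(?A*?B^2) - 2*t/(?A*?B)"
        by (simp add: ht_def power2_eq_square mult.assoc)
      show ?thesis using DERIV_minus[OF D] unfolding T minus_divide_left alg3[OF A B refl refl] .
    qed
    then show "((\<lambda>t. - R t) has_vector_derivative (ht 1 0 0 a b t + a * ht 0 1 0 a b t + b * ht 0 0 1 a b t - 2 * ht 0 0 0 a b t)) (at t within {0..1})"
      by (simp add: has_real_derivative_iff_has_vector_derivative)
  qed simp
  ultimately have "frakH 1 0 0 a b + a * frakH 0 1 0 a b + b * frakH 0 0 1 a b - 2 * frakH 0 0 0 a b = - R 1 - (- R 0)"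
    by (rule has_integral_unique)
  moreover have "R 1 = 0" "R 0 = 0" unfolding R_def by simp_all
  ultimately show ?thesis by simp
qed

lemma alg4: fixes A B a b t :: real assumes A: "A \<noteq>0" and B: "B\<noteq>0" and eA: "A = 1 - t + a*t" and eB: "B = 1-t+b*t"
shows "-(((3*t^2)*(1-t) - t^3)*(A*B) - t^3*(1-t)*((a-1)*B + (b-1)*A)) / ((A*B)*(A*B)) = 2*t^3/(A*B) + a*t^3/(A^2*B) + b*t^3/(A*B^2) - 3*t^2/(A*B)"
proof -
  have N: "-(((3*t^2)*(1-t) - t^3)*(A*B) - t^3*(1-t)*((a-1)*B + (b-1)*A)) = 2*t^3*A*B + a*t^3*B + b*t^3*A - 3*t^2*A*B"
    unfolding eA eB by (simp add: algebra_simps power2_eq_square power3_eq_cube)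
  have "2*t^3/(A*B) + a*t^3/(A^2*B) + b*t^3/(A*B^2) - 3*t^2/(A*B) = (2*t^3*A*B + a*t^3*B + b*t^3*A - 3*t^2*A*B) / ((A*B)*(A*B))"
    using A B by (simp add: field_simps power2_eq_square)
  then show ?thesis using N by simp
qed

lemma I4:
  assumes a: "0 < a" and b: "0 < b"
  shows "2 * frakH 2 0 0 a b + a * frakH 1 1 0 a b + b * frakH 1 0 1 a b - 3 * frakH 1 0 0 a b = 0"
proof -
  define R where "R t = t^3 * (1-t) / ((1-t+a*t) * (1-t+b*t))" for t :: real
  have "((\<lambda>t. 2 * ht 2 0 0 a b t + a * ht 1 1 0 a b t + b * ht 1 0 1 a b t - 3 * ht 1 0 0 a b t) has_integral
     (2 * frakH 2 0 0 a b + a * frakH 1 1 0 a b + b * frakH 1 0 1 a b - 3 * frakH 1 0 0 a b)) {0..1}"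
    by (intro has_integral_add has_integral_diff has_integral_mult_right hi a b)
  moreover have "((\<lambda>t. 2 * ht 2 0 0 a b t + a * ht 1 1 0 a b t + b * ht 1 0 1 a b t - 3 * ht 1 0 0 a b t) has_integral
     (- R 1 - (- R 0))) {0..1}"
  proof (rule fundamental_theorem_of_calculus)
    fix t :: real assume t: "t \<in> {0..1}"
    have A: "1 - t + a * t \<noteq> 0" and B: "1 - t + b * t \<noteq> 0" using lin_pos[of a t] lin_pos[of b t] a b t by auto
    have "((\<lambda>t. - R t) has_real_derivative (2 * ht 2 0 0 a b t + a * ht 1 1 0 a b t + b * ht 1 0 1 a b t - 3 * ht 1 0 0 a b t)) (at t within {0..1})"
    proof -
      let ?A = "1 - t + a*t" and ?B = "1 - t + b*t"
      have D: "(R has_real_derivative (((3*t^2)*(1-t) - t^3)*(?A*?B) - t^3*(1-t)*((a-1)*?B + (b-1)*?A)) / ((?A*?B)*(?A*?B))) (at t within {0..1})"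
        unfolding R_def
        apply (rule derivative_eq_intros refl)+
        subgoal using A B by simp
        by (simp add: algebra_simps)
      have T: "2 * ht 2 0 0 a b t + a * ht 1 1 0 a b t + b * ht 1 0 1 a b t - 3 * ht 1 0 0 a b t = 2*t^3/(?A*?B) + a*t^3/(?A^2*?B) + b*t^3/(?A*?B^2) - 3*t^2/(?A*?B)"
        by (simp add: ht_def power2_eq_square power3_eq_cube mult.assoc)
      show ?thesis using DERIV_minus[OF D] unfolding T minus_divide_left alg4[OF A B refl refl] .
    qed
    then show "((\<lambda>t. - R t) has_vector_derivative (2 * ht 2 0 0 a b t + a * ht 1 1 0 a b t + b * ht 1 0 1 a b t - 3 * ht 1 0 0 a b t)) (at t within {0..1})"
      by (simp add: has_real_derivative_iff_has_vector_derivative)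
  qed simp
  ultimately have "2 * frakH 2 0 0 a b + a * frakH 1 1 0 a b + b * frakH 1 0 1 a b - 3 * frakH 1 0 0 a b = - R 1 - (- R 0)"
    by (rule has_integral_unique)
  moreover have "R 1 = 0" "R 0 = 0" unfolding R_def by simp_all
  ultimately show ?thesis by simp
qed


lemma wpos: "0 < a \<Longrightarrow> 0 < b \<Longrightarrow> 0 \<le> u \<Longrightarrow> 0 \<le> v \<Longrightarrow> 0 \<le> w \<Longrightarrow> u + v + w = 1 \<Longrightarrow> 0 < u + v * a + w * (b::real)"
proof -
  assume a: "0 < a" and b: "0 < b" and u: "0 \<le> u" and v: "0 \<le> v" and w: "0 \<le> w" and s: "u + v + w = 1"
  have va: "0 \<le> v * a" "0 \<le> w * b" using v w a b by auto
  show ?thesis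
  proof (cases "v > 0")
    case True then have "0 < v * a" using a by simp
    then show ?thesis using u va by linarith
  next
    case False
    show ?thesis
    proof (cases "w > 0")
      case True then have "0 < w * b" using b by simp
      then show ?thesis using u va by linarith
    next
      case False2: False
      then have "u = 1" using False s v w by linarith
      then show ?thesis using va by linarith
    qed
  qed
qed

lemma inner_int:
  assumes a: "0 < a" and b: "0 < b" and r: "0 \<le> r" "r \<le> 1"
  shows "((\<lambda>s. 1 / ((1 - r + b * r) + s * (a - b))^2) has_integral ht 0 0 0 a b r) {0..r}"
proof -
  define P where "P = 1 - r + b * r"
  define Q where "Q = a - b"
  have pos: "0 < P + s * Q" if "0 \<le> s" "s \<le> r" for s
    using wpos[OF a b, of "1 - r" s "r - s"] that r unfolding P_def Q_def by (simp add: algebra_simps)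
  have P0: "0 < P" using pos[of 0] r by simp
  have "((\<lambda>s. 1 / (P + s * Q)^2) has_integral (r / (P * (P + r * Q)) - 0 / (P * (P + 0 * Q)))) {0..r}"
  proof (rule fundamental_theorem_of_calculus)
    fix s assume s: "s \<in> {0..r}"
    have nz: "P + s * Q \<noteq> 0" using pos[of s] s by auto
    have e: "P * (P + s*Q) \<noteq> 0" using nz P0 by simp
    have "((\<lambda>s. s / (P * (P + s * Q))) has_real_derivative 1 / (P + s * Q)^2) (at s within {0..r})"
      apply (rule derivative_eq_intros refl)+
       apply (rule e)
      apply (simp only: power2_eq_square)
      using nz P0 apply (simp add: divide_simps)
      apply (simp add: algebra_simps)
      done
    then show "((\<lambda>s. s / (P * (P + s * Q))) has_vector_derivative 1 / (P + s * Q)^2) (at s within {0..r})"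
      by (simp add: has_real_derivative_iff_has_vector_derivative)
  qed (use r in simp)
  moreover have "r / (P * (P + r * Q)) - 0 / (P * (P + 0 * Q)) = ht 0 0 0 a b r"
    unfolding ht_def P_def Q_def by (simp add: algebra_simps)
  ultimately show ?thesis unfolding P_def Q_def by simp
qed


definition gT :: "real \<Rightarrow> real \<Rightarrow> real \<times> real \<Rightarrow> real" where
  "gT a b p = (if 0 \<le> fst p \<and> 0 \<le> snd p \<and> fst p + snd p \<le> 1
     then 1 / ((1 - fst p - snd p) * 1 + fst p * a + snd p * b)^2 else 0)"

lemma gT_meas[measurable]: "(\<lambda>p. ennreal (gT a b p)) \<in> borel_measurable (lborel \<Otimes>\<^sub>M lborel)"
  unfolding gT_def by measurable

lemma gT_meas2: "(\<lambda>y. ennreal (gT a b (x, y))) \<in> borel_measurable borel"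
  unfolding gT_def fst_conv snd_conv by measurable

lemma gT_meas3: "(\<lambda>(x, r). ennreal (gT a b (x, r - x))) \<in> borel_measurable (lborel \<Otimes>\<^sub>M lborel)"
  unfolding gT_def by measurable

lemma nn_T:
  assumes a: "0 < a" and b: "0 < b"
  shows "(\<integral>\<^sup>+p. ennreal (gT a b p) \<partial>lborel) = ennreal (frakH 0 0 0 a b)"
proof -
  let ?G = "\<lambda>p. ennreal (gT a b p)"
  have 1: "(\<integral>\<^sup>+p. ?G p \<partial>lborel) = (\<integral>\<^sup>+x. \<integral>\<^sup>+y. ?G (x, y) \<partial>lborel \<partial>lborel)"
    using lborel.nn_integral_fst[OF gT_meas, of a b] by (simp add: lborel_prod)
  have 2: "(\<integral>\<^sup>+y. ?G (x, y) \<partial>lborel) = (\<integral>\<^sup>+r. ?G (x, r - x) \<partial>lborel)" for x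
    using nn_integral_real_affine[of "\<lambda>y. ?G (x, y)" 1 "-x", OF gT_meas2] by simp
  have 3: "(\<integral>\<^sup>+x. \<integral>\<^sup>+r. ?G (x, r - x) \<partial>lborel \<partial>lborel) = (\<integral>\<^sup>+r. \<integral>\<^sup>+x. ?G (x, r - x) \<partial>lborel \<partial>lborel)"
    using lborel_pair.Fubini'[of "\<lambda>x r. ?G (x, r - x)"] gT_meas3[of a b] by simp
  have 4: "(\<integral>\<^sup>+x. ?G (x, r - x) \<partial>lborel) = ennreal (ht 0 0 0 a b r) * indicator {0..1} r" for r
  proof (cases "0 \<le> r \<and> r \<le> 1")
    case True
    have eq: "?G (x, r - x) = ennreal (1 / ((1 - r + b * r) + x * (a - b))^2) * indicator {0..r} x" for x
    proof (cases "0 \<le> x \<and> x \<le> r")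
      case True2: True
      show ?thesis using True True2 by (simp add: gT_def indicator_def algebra_simps)
    qed (auto simp: gT_def indicator_def)
    have "(\<integral>\<^sup>+x. ?G (x, r - x) \<partial>lborel) = ennreal (ht 0 0 0 a b r)"
      unfolding eq by (rule nn_integral_has_integral_lebesgue'[OF _ inner_int[OF a b]]) (use True in auto)
    then show ?thesis using True by (simp add: indicator_def)
  next
    case False
    then have "?G (x, r - x) = 0" for x by (auto simp: gT_def)
    then show ?thesis using False by (simp add: indicator_def)
  qed
  have 5: "(\<integral>\<^sup>+r. ennreal (ht 0 0 0 a b r) * indicator {0..1} r \<partial>lborel) = ennreal (frakH 0 0 0 a b)"
  proof (rule nn_integral_has_integral_lebesgue'[OF _ hi[OF a b]])
    fix t :: real assume t: "t \<in> {0..1}"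
    then show "0 \<le> ht 0 0 0 a b t" using lin_pos[of a t] lin_pos[of b t] a b unfolding ht_def by simp
  qed
  show ?thesis unfolding 1 2 3 4 5 ..
qed


lemma d2ln: assumes y: "0 < (y::real)" shows "(deriv ^^ 2) ln y = - 1 / y^2"
proof -
  have "((\<lambda>z. inverse z) has_field_derivative - (inverse y ^ 2)) (at y)"
    using DERIV_inverse[of y] y by (simp add: power2_eq_square)
  then have "((\<lambda>z. deriv ln z) has_field_derivative - (inverse y ^ 2)) (at y)"
  proof (rule has_field_derivative_transform_within_open[of _ _ _ "{0<..}"])
    fix z :: real assume "z \<in> {0<..}"
    then show "inverse z = deriv ln z" using DERIV_imp_deriv[OF DERIV_ln[of z]] by simp
  qed (use y in auto)
  then have "deriv (deriv ln) y = - (inverse y ^ 2)" by (rule DERIV_imp_deriv)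
  then show ?thesis by (simp add: numeral_2_eq_2 power_inverse divide_inverse)
qed

lemma I1:
  assumes a: "0 < a" and b: "0 < b"
  shows "frakH 0 0 0 a b = - divdiff3 ln 1 a b"
proof -
  define T where "T = {(t1::real, t2::real). 0 \<le> t1 \<and> 0 \<le> t2 \<and> t1 + t2 \<le> 1}"
  have gnn: "0 \<le> gT a b p" for p unfolding gT_def by simp
  have H0: "0 \<le> frakH 0 0 0 a b"
  proof (rule has_integral_nonneg[OF hi[OF a b]])
    fix t :: real assume t: "t \<in> {0..1}"
    then show "0 \<le> ht 0 0 0 a b t" using lin_pos[of a t] lin_pos[of b t] a b unfolding ht_def by simp
  qed
  have "gT a b \<in> borel_measurable (lborel \<Otimes>\<^sub>M lborel)" unfolding gT_def by measurable
  then have gm: "gT a b \<in> borel_measurable borel" unfolding lborel_prod by simp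
  have hU: "(gT a b has_integral frakH 0 0 0 a b) UNIV"
    by (rule nn_integral_has_integral[OF gm gnn nn_T[OF a b] H0])
  have "(\<lambda>p. if p \<in> T then gT a b p else 0) = gT a b"
    by (rule ext) (auto simp: T_def gT_def)
  then have hT: "(gT a b has_integral frakH 0 0 0 a b) T"
    using hU has_integral_restrict_UNIV[of T "gT a b"] by simp
  have "divdiff3 ln 1 a b = integral T (\<lambda>p. - gT a b p)"
    unfolding divdiff3_def T_def[symmetric]
  proof (rule integral_cong)
    fix p assume p: "p \<in> T"
    obtain t1 t2 where pe: "p = (t1, t2)" by (cases p)
    have c: "0 \<le> t1" "0 \<le> t2" "t1 + t2 \<le> 1" using p pe by (auto simp: T_def)
    have "0 < (1 - t1 - t2) + t1 * a + t2 * b" using wpos[OF a b, of "1 - t1 - t2" t1 t2] c by simp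
    then show "(case p of (t1, t2) \<Rightarrow> (deriv ^^ 2) ln ((1 - t1 - t2) * 1 + t1 * a + t2 * b)) = - gT a b p"
      using c unfolding pe by (simp add: d2ln gT_def)
  qed
  also have "\<dots> = - frakH 0 0 0 a b" using hT by (simp add: integral_neg has_integral_integrable_integral)
  finally show ?thesis by simp
qed


theorem mainTheorem17:
  fixes a b :: real
  assumes "a > 0" and "b > 0"
  shows "frakH 0 0 0 a b = - divdiff3 ln 1 a b
    \<and> frakH 0 1 0 a b = - partial_a (frakH 0 0 0) a b
    \<and> frakH 1 0 0 a b = Dop (frakH 0 0 0) a b + 2 * frakH 0 0 0 a b
    \<and> frakH 2 0 0 a b = 1/2 * (Dop (frakH 1 0 0) a b + 3 * frakH 1 0 0 a b)
    \<and> frakH 2 0 0 a b =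
           - 1/2 * (Dop (\<lambda>u v. Dop (\<lambda>p q. divdiff3 ln 1 p q) u v + 2 * divdiff3 ln 1 u v) a b
                   + 3 * (Dop (\<lambda>p q. divdiff3 ln 1 p q) a b + 2 * divdiff3 ln 1 a b))
    \<and> frakH 1 1 0 a b = - partial_a (frakH 1 0 0) a b"
proof -
  have a: "0 < a" and b: "0 < b" using assms by auto
  have h1: "frakH 0 0 0 a b = - divdiff3 ln 1 a b" by (rule I1[OF a b])
  have h2: "frakH 0 1 0 a b = - partial_a (frakH 0 0 0) a b"
    using partial_a_frakH[OF a b, of 0 0 0] by simp
  have h3g: "frakH 1 0 0 u v = Dop (frakH 0 0 0) u v + 2 * frakH 0 0 0 u v" if u: "0 < u" and v: "0 < v" for u v
    using Dop_frakH[OF u v, of 0 0 0] I3[OF u v] by simp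
  have h3: "frakH 1 0 0 a b = Dop (frakH 0 0 0) a b + 2 * frakH 0 0 0 a b" by (rule h3g[OF a b])
  have h4: "frakH 2 0 0 a b = 1/2 * (Dop (frakH 1 0 0) a b + 3 * frakH 1 0 0 a b)"
    using Dop_frakH[OF a b, of 1 0 0] I4[OF a b] by simp
  have dd: "divdiff3 ln 1 u v = (-1) * frakH 0 0 0 u v" if "0 < u" "0 < v" for u v
    using I1[OF that] by simp
  have DF: "Dop (\<lambda>p q. divdiff3 ln 1 p q) u v = (-1) * Dop (frakH 0 0 0) u v" if "0 < u" "0 < v" for u v
    by (rule Dop_cong[OF that dd])
  define G where "G u v = Dop (\<lambda>p q. divdiff3 ln 1 p q) u v + 2 * divdiff3 ln 1 u v" for u v
  have G: "G u v = (-1) * frakH 1 0 0 u v" if "0 < u" "0 < v" for u v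
    unfolding G_def DF[OF that] dd[OF that] h3g[OF that] by simp
  have DG: "Dop G a b = (-1) * Dop (frakH 1 0 0) a b" by (rule Dop_cong[OF a b G])
  have h5: "frakH 2 0 0 a b =
           - 1/2 * (Dop (\<lambda>u v. Dop (\<lambda>p q. divdiff3 ln 1 p q) u v + 2 * divdiff3 ln 1 u v) a b
                   + 3 * (Dop (\<lambda>p q. divdiff3 ln 1 p q) a b + 2 * divdiff3 ln 1 a b))"
  proof -
    have "(\<lambda>u v. Dop (\<lambda>p q. divdiff3 ln 1 p q) u v + 2 * divdiff3 ln 1 u v) = G"
      by (simp add: G_def[abs_def])
    then show ?thesis using DG G[OF a b] h4 unfolding G_def by (simp add: field_simps)
  qed
  have h6: "frakH 1 1 0 a b = - partial_a (frakH 1 0 0) a b"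
    using partial_a_frakH[OF a b, of 1 0 0] by simp
  show ?thesis using h1 h2 h3 h4 h5 h6 by blast
qed

end
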